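(* Let $\mu,\nu\in\mathbb{C}$. (1) $\mathcal{D}_{\mu,\nu}=\mathcal{D}_{\nu,\mu}$. (2) For every $\lambda\in\mathbb{C}$, the differential equation $\mathcal{D}_{\mu,\nu}u=\lambda u$ has a regular singularity at $x=0$, with characteristic exponents $0,-\mu,-\nu,-\mu-\nu$. (3) If $\mu,\nu$ are real with $\mu,\nu\geq -1$, then $\mathcal{D}_{\mu,\nu}$ (on $C_c^\infty(\mathbb{R}_+)$) is a symmetric operator on $L^2(\mathbb{R}_+,x^{\mu+\nu+1}\,dx)$. (5) $\mathcal{D}_{\mu,\pm1}=\mathcal{S}_{\mu,\pm1}^2-C_{\mu,\pm1}$, where $\mathcal{S}_{\mu,-1}=\frac1x\big(\theta(\theta+\mu)-x^2\big)$, $C_{\mu,-1}=\frac{(\mu+1)^2}{2}$, and $\mathcal{S}_{\mu,+1}=\frac1x\big(\theta(\theta+\mu+2)+\mu+1-x^2\big)$, $C_{\mu,+1}=\frac{(\mu+1)^2}{2}+2$.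
   Context: Let $\theta=x\frac{d}{dx}$ be the Euler operator on functions on $\mathbb{R}_+=(0,\infty)$; products of operators denote composition, and $\frac1x$, $x^2$ denote multiplication operators. For $\mu,\nu\in\mathbb{C}$ define the fourth order differential operator $$\mathcal{D}_{\mu,\nu}=\frac{1}{x^2}\big((\theta+\nu)(\theta+\mu+\nu)-x^2\big)\big(\theta(\theta+\mu)-x^2\big)-\frac{(\mu-\nu)(\mu+\nu+2)}{2}.$$ *)

theory Defs
  imports "HOL-Analysis.Analysis"
begin

text \<open>Functions on R_+ are modelled as complex-valued functions on the reals;
only their values at points x > 0 matter.\<close>

type_synonym cfun = "real \<Rightarrow> complex"

definition theta :: "cfun \<Rightarrow> cfun" where
  "theta f = (\<lambda>x. complex_of_real x * vector_derivative f (at x))"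

definition theta_plus :: "complex \<Rightarrow> cfun \<Rightarrow> cfun" where
  "theta_plus c f = (\<lambda>x. theta f x + c * f x)"

definition inner_op :: "complex \<Rightarrow> cfun \<Rightarrow> cfun" where
  "inner_op \<mu> f = (\<lambda>x. theta (theta_plus \<mu> f) x - (complex_of_real x)^2 * f x)"

definition outer_op :: "complex \<Rightarrow> complex \<Rightarrow> cfun \<Rightarrow> cfun" where
  "outer_op \<mu> \<nu> f = (\<lambda>x. theta_plus \<nu> (theta_plus (\<mu> + \<nu>) f) x - (complex_of_real x)^2 * f x)"

definition Dop :: "complex \<Rightarrow> complex \<Rightarrow> cfun \<Rightarrow> cfun" where
  "Dop \<mu> \<nu> u = (\<lambda>x. outer_op \<mu> \<nu> (inner_op \<mu> u) x / (complex_of_real x)^2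
      - (\<mu> - \<nu>) * (\<mu> + \<nu> + 2) / 2 * u x)"

definition S_minus :: "complex \<Rightarrow> cfun \<Rightarrow> cfun" where
  "S_minus \<mu> u = (\<lambda>x. inner_op \<mu> u x / complex_of_real x)"

definition S_plus :: "complex \<Rightarrow> cfun \<Rightarrow> cfun" where
  "S_plus \<mu> u = (\<lambda>x. (theta (theta_plus (\<mu> + 2) u) x + (\<mu> + 1) * u x
      - (complex_of_real x)^2 * u x) / complex_of_real x)"

fun nderiv :: "nat \<Rightarrow> cfun \<Rightarrow> cfun" where
  "nderiv 0 f = f"
| "nderiv (Suc n) f = (\<lambda>x. vector_derivative (nderiv n f) (at x))"

definition smooth_pos :: "cfun \<Rightarrow> bool" where
  "smooth_pos f \<longleftrightarrow> (\<forall>n. \<forall>x>0. (nderiv n f has_vector_derivative nderiv (Suc n) f x) (at x))"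

definition cc_smooth_pos :: "cfun \<Rightarrow> bool" where
  "cc_smooth_pos f \<longleftrightarrow> smooth_pos f \<and> (\<exists>a b. 0 < a \<and> a \<le> b \<and> (\<forall>x. x \<notin> {a..b} \<longrightarrow> f x = 0))"

text \<open>Linear ODE  sum_{k<=n} a k x * u^(k)(x) = 0  on (0,infinity).\<close>
definition regular_singular_at_0 :: "(nat \<Rightarrow> cfun) \<Rightarrow> nat \<Rightarrow> bool" where
  "regular_singular_at_0 a n \<longleftrightarrow>
     (\<exists>r>0. (\<forall>x\<in>{0<..<r}. a n x \<noteq> 0) \<and>
        (\<forall>k\<le>n. \<exists>g::nat \<Rightarrow> complex. \<forall>x\<in>{0<..<r}.
            (\<lambda>j. g j * (complex_of_real x)^j) sums
              ((complex_of_real x)^(n-k) * a k x / a n x)))"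

text \<open>Indicial polynomial at 0:  sum_k p_k(0) s(s-1)...(s-k+1), where p_k(0) is the
  value at 0 of (the analytic continuation of) x^(n-k) a_k(x)/a_n(x).
  Its roots (with multiplicity) are the characteristic exponents at 0.\<close>
definition indicial_poly :: "(nat \<Rightarrow> cfun) \<Rightarrow> nat \<Rightarrow> complex \<Rightarrow> complex" where
  "indicial_poly a n s =
     (\<Sum>k\<le>n. Lim (at_right 0) (\<lambda>x. (complex_of_real x)^(n-k) * a k x / a n x)
               * (\<Prod>i<k. s - of_nat i))"

end

theory Submission
  imports Defs
begin

declare nderiv.simps[simp del]

lemma vd_eq:
  assumes "open S" "x \<in> S" "\<And>y. y \<in> S \<Longrightarrow> g y = G y" "(G has_vector_derivative D) (at x)"
  shows "vector_derivative g (at x) = D"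
  by (rule vector_derivative_at, rule has_vector_derivative_transform_within_open[OF assms(4,1,2)])
     (simp add: assms(3))

lemma hvdU:
  assumes "smooth_pos u" "y > 0"
  shows "(nderiv k u has_vector_derivative nderiv (Suc k) u y) (at y within S)"
  using assms unfolding smooth_pos_def by (blast intro: has_vector_derivative_at_within)

lemma vdU: "smooth_pos u \<Longrightarrow> y > 0 \<Longrightarrow> vector_derivative (nderiv k u) (at y) = nderiv (Suc k) u y"
  by (rule vector_derivative_at, rule hvdU)

lemma L_theta:
  assumes "\<And>y. y > 0 \<Longrightarrow> g y = G y" "\<And>y. y > 0 \<Longrightarrow> (G has_vector_derivative G1 y) (at y)" "x > 0"
  shows "theta g x = of_real x * G1 x"
  unfolding theta_def using assms by (subst vd_eq[of "{0<..}" x g G]) auto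

lemma L_tp:
  assumes "\<And>y. y > 0 \<Longrightarrow> g y = G y" "\<And>y. y > 0 \<Longrightarrow> (G has_vector_derivative G1 y) (at y)" "x > 0"
  shows "theta_plus c g x = of_real x * G1 x + c * G x"
  unfolding theta_plus_def using assms L_theta[OF assms] by simp

lemma L_tp2:
  assumes "\<And>y. y > 0 \<Longrightarrow> g y = G y" "\<And>y. y > 0 \<Longrightarrow> (G has_vector_derivative G1 y) (at y)"
    "\<And>y. y > 0 \<Longrightarrow> (G1 has_vector_derivative G2 y) (at y)" "x > 0"
  shows "theta (theta_plus c g) x = of_real x * (G1 x + of_real x * G2 x + c * G1 x)"
proof (rule L_theta[where G = "\<lambda>y. of_real y * G1 y + c * G y"])
  show "\<And>y. y > 0 \<Longrightarrow> theta_plus c g y = of_real y * G1 y + c * G y" using L_tp assms by blast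
  show "((\<lambda>y. of_real y * G1 y + c * G y) has_vector_derivative G1 y + of_real y * G2 y + c * G1 y) (at y)"
    if "y > 0" for y
    using assms that by (auto intro!: derivative_eq_intros)
qed (fact assms)

lemma L_inner:
  assumes "\<And>y. y > 0 \<Longrightarrow> g y = G y" "\<And>y. y > 0 \<Longrightarrow> (G has_vector_derivative G1 y) (at y)"
    "\<And>y. y > 0 \<Longrightarrow> (G1 has_vector_derivative G2 y) (at y)" "x > 0"
  shows "inner_op \<mu> g x = of_real x * (G1 x + of_real x * G2 x + \<mu> * G1 x) - (of_real x)^2 * G x"
  unfolding inner_op_def using L_tp2[OF assms] assms by simp

lemma L_outer:
  assumes "\<And>y. y > 0 \<Longrightarrow> g y = G y" "\<And>y. y > 0 \<Longrightarrow> (G has_vector_derivative G1 y) (at y)"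
    "\<And>y. y > 0 \<Longrightarrow> (G1 has_vector_derivative G2 y) (at y)" "x > 0"
  shows "outer_op \<mu> \<nu> g x = of_real x * (G1 x + of_real x * G2 x + (\<mu>+\<nu>) * G1 x)
     + \<nu> * (of_real x * G1 x + (\<mu>+\<nu>) * G x) - (of_real x)^2 * G x"
proof -
  have "theta_plus \<nu> (theta_plus (\<mu>+\<nu>) g) x = of_real x * (G1 x + of_real x * G2 x + (\<mu>+\<nu>) * G1 x)
     + \<nu> * (of_real x * G1 x + (\<mu>+\<nu>) * G x)"
  proof (rule L_tp[where G = "\<lambda>y. of_real y * G1 y + (\<mu>+\<nu>) * G y"])
    show "\<And>y. y > 0 \<Longrightarrow> theta_plus (\<mu>+\<nu>) g y = of_real y * G1 y + (\<mu>+\<nu>) * G y"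
      using L_tp assms by blast
    show "((\<lambda>y. of_real y * G1 y + (\<mu>+\<nu>) * G y) has_vector_derivative G1 y + of_real y * G2 y + (\<mu>+\<nu>) * G1 y) (at y)"
      if "y > 0" for y
      using assms that by (auto intro!: derivative_eq_intros)
  qed (fact assms)
  then show ?thesis unfolding outer_op_def using assms by simp
qed

lemma L_splus:
  assumes "\<And>y. y > 0 \<Longrightarrow> g y = G y" "\<And>y. y > 0 \<Longrightarrow> (G has_vector_derivative G1 y) (at y)"
    "\<And>y. y > 0 \<Longrightarrow> (G1 has_vector_derivative G2 y) (at y)" "x > 0"
  shows "S_plus \<mu> g x = (of_real x * (G1 x + of_real x * G2 x + (\<mu>+2) * G1 x) + (\<mu>+1) * G x - (of_real x)^2 * G x) / of_real x"
  unfolding S_plus_def using L_tp2[OF assms] assms by simp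

definition DF :: "complex \<Rightarrow> complex \<Rightarrow> complex \<Rightarrow> (nat \<Rightarrow> complex) \<Rightarrow> complex" where
  "DF \<mu> \<nu> y f = y^2 * f 4 + (6+2*\<mu>+2*\<nu>) * y * f 3
     + (7+6*\<mu>+6*\<nu>+\<mu>^2+\<nu>^2+3*\<mu>*\<nu> - 2*y^2) * f 2
     + ((1+\<mu>)*(1+\<nu>)*(1+\<mu>+\<nu>)/y - (6+2*\<mu>+2*\<nu>)*y) * f 1
     + (y^2 - (\<mu>+\<nu>+2)*(\<mu>+\<nu>+4)/2) * f 0"

lemma hsq: "D = 2 * of_real y \<Longrightarrow> ((\<lambda>x. (complex_of_real x)^2) has_vector_derivative D) (at y within S)"
  unfolding power2_eq_square by (auto intro!: derivative_eq_intros)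

lemma nderiv_num: "nderiv (Suc 0) u = nderiv 1 u" "nderiv (Suc 1) u = nderiv 2 u"
  "nderiv (Suc 2) u = nderiv 3 u" "nderiv (Suc 3) u = nderiv 4 u" by (simp_all add: eval_nat_numeral)

lemma Dop_DF:
  assumes u: "smooth_pos u" and x: "x > 0"
  shows "Dop \<mu> \<nu> u x = DF \<mu> \<nu> (of_real x) (\<lambda>k. nderiv k u x)"
proof -
  let ?U = "\<lambda>k. nderiv k u"
  have d: "\<And>k y. y > 0 \<Longrightarrow> (?U k has_vector_derivative ?U (Suc k) y) (at y)"
    using hvdU[OF u] by blast
  have d0: "\<And>y. y > 0 \<Longrightarrow> (?U 0 has_vector_derivative ?U 1 y) (at y)"
   and d1: "\<And>y. y > 0 \<Longrightarrow> (?U 1 has_vector_derivative ?U 2 y) (at y)"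
   and d2: "\<And>y. y > 0 \<Longrightarrow> (?U 2 has_vector_derivative ?U 3 y) (at y)"
   and d3: "\<And>y. y > 0 \<Longrightarrow> (?U 3 has_vector_derivative ?U 4 y) (at y)"
    using d[of _ 0] d[of _ 1] d[of _ 2] d[of _ 3] by (simp_all only: nderiv_num)
  have i: "inner_op \<mu> u y = of_real y * (?U 1 y + of_real y * ?U 2 y + \<mu> * ?U 1 y) - (of_real y)^2 * ?U 0 y"
    if "y > 0" for y
    by (rule L_inner[OF _ d0 d1 that]) (simp add: nderiv.simps(1))
  define G where "G = (\<lambda>y. of_real y * (?U 1 y + of_real y * ?U 2 y + \<mu> * ?U 1 y) - (of_real y)^2 * ?U 0 y)"
  define G1 where "G1 = (\<lambda>y. (?U 1 y + of_real y * ?U 2 y + \<mu> * ?U 1 y)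
     + of_real y * (?U 2 y + ?U 2 y + of_real y * ?U 3 y + \<mu> * ?U 2 y) - (2 * of_real y * ?U 0 y + (of_real y)^2 * ?U 1 y))"
  define G2 where "G2 = (\<lambda>y::real. (?U 2 y + ?U 2 y + of_real y * ?U 3 y + \<mu> * ?U 2 y)
     + (?U 2 y + ?U 2 y + of_real y * ?U 3 y + \<mu> * ?U 2 y)
     + of_real y * (?U 3 y + ?U 3 y + ?U 3 y + of_real y * ?U 4 y + \<mu> * ?U 3 y)
     - (2 * ?U 0 y + 2 * of_real y * ?U 1 y + 2 * of_real y * ?U 1 y + (of_real y)^2 * ?U 2 y))"
  have dG: "(G has_vector_derivative G1 y) (at y)" if "y > 0" for y
    unfolding G_def G1_def
    apply (rule derivative_eq_intros d0[OF that] d1[OF that] d2[OF that] d3[OF that] refl hsq)+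
    apply (simp add: algebra_simps)
    done
  have dG1: "(G1 has_vector_derivative G2 y) (at y)" if "y > 0" for y
    unfolding G2_def G1_def
    apply (rule derivative_eq_intros d0[OF that] d1[OF that] d2[OF that] d3[OF that] refl hsq)+
    apply (simp add: algebra_simps)
    done
  have o: "outer_op \<mu> \<nu> (inner_op \<mu> u) x = of_real x * (G1 x + of_real x * G2 x + (\<mu>+\<nu>) * G1 x)
     + \<nu> * (of_real x * G1 x + (\<mu>+\<nu>) * G x) - (of_real x)^2 * G x"
    by (rule L_outer[OF _ dG dG1 x]) (simp add: i G_def)
  have u0: "u x = nderiv 0 u x" by (simp add: nderiv.simps(1))
  have xn: "complex_of_real x \<noteq> 0" using x by simp
  show ?thesis unfolding Dop_def o u0 unfolding DF_def G_def G1_def G2_def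
    using xn by (simp add: field_simps power2_eq_square power3_eq_cube)
qed


declare nderiv.simps[simp del]

lemma hdiv:
  assumes "(f has_vector_derivative f') (at y within S)"
    "D = f' / of_real y - f y / (of_real y)^2" "y \<noteq> 0"
  shows "((\<lambda>x. f x / complex_of_real x) has_vector_derivative D) (at y within S)"
proof -
  have e: "(\<lambda>x. f x / complex_of_real x) = (\<lambda>x. f x * complex_of_real (inverse x))"
    by (simp add: divide_inverse of_real_inverse)
  have "((\<lambda>x. f x * complex_of_real (inverse x)) has_vector_derivative
     (f y * of_real (- (inverse y ^ Suc (Suc 0))) + f' * of_real (inverse y))) (at y within S)"
    by (intro has_vector_derivative_mult has_vector_derivative_of_real assms(1) DERIV_inverse assms(3))
  then show ?thesis unfolding e assms(2) using assms(3)
    by (simp add: field_simps power2_eq_square of_real_inverse)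
qed

lemma Sminus_sq:
  assumes u: "smooth_pos u" and x: "x > 0"
  shows "S_minus \<mu> (S_minus \<mu> u) x = DF \<mu> (-1) (of_real x) (\<lambda>k. nderiv k u x) + (\<mu> + 1)^2 / 2 * u x"
proof -
  let ?U = "\<lambda>k. nderiv k u"
  have d: "\<And>k y. y > 0 \<Longrightarrow> (?U k has_vector_derivative ?U (Suc k) y) (at y)"
    using hvdU[OF u] by blast
  have d0: "\<And>y. y > 0 \<Longrightarrow> (?U 0 has_vector_derivative ?U 1 y) (at y)"
   and d1: "\<And>y. y > 0 \<Longrightarrow> (?U 1 has_vector_derivative ?U 2 y) (at y)"
   and d2: "\<And>y. y > 0 \<Longrightarrow> (?U 2 has_vector_derivative ?U 3 y) (at y)"
   and d3: "\<And>y. y > 0 \<Longrightarrow> (?U 3 has_vector_derivative ?U 4 y) (at y)"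
    using d[of _ 0] d[of _ 1] d[of _ 2] d[of _ 3] by (simp_all only: nderiv_num)
  define G where "G = (\<lambda>y. ?U 1 y + of_real y * ?U 2 y + \<mu> * ?U 1 y - of_real y * ?U 0 y)"
  define G1 where "G1 = (\<lambda>y. ?U 2 y + ?U 2 y + of_real y * ?U 3 y + \<mu> * ?U 2 y - ?U 0 y - of_real y * ?U 1 y)"
  define G2 where "G2 = (\<lambda>y. 3 * ?U 3 y + of_real y * ?U 4 y + \<mu> * ?U 3 y - 2 * ?U 1 y - of_real y * ?U 2 y)"
  have g: "S_minus \<mu> u y = G y" if "y > 0" for y
  proof -
    have "inner_op \<mu> u y = of_real y * (?U 1 y + of_real y * ?U 2 y + \<mu> * ?U 1 y) - (of_real y)^2 * ?U 0 y"
      by (rule L_inner[OF _ d0 d1 that]) (simp add: nderiv.simps(1))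
    then show ?thesis using that unfolding S_minus_def G_def
      by (simp add: field_simps power2_eq_square)
  qed
  have dG: "(G has_vector_derivative G1 y) (at y)" if "y > 0" for y
    unfolding G_def G1_def
    apply (rule derivative_eq_intros d0[OF that] d1[OF that] d2[OF that] d3[OF that] refl hsq)+
    apply (simp add: algebra_simps)
    done
  have dG1: "(G1 has_vector_derivative G2 y) (at y)" if "y > 0" for y
    unfolding G2_def G1_def
    apply (rule derivative_eq_intros d0[OF that] d1[OF that] d2[OF that] d3[OF that] refl hsq)+
    apply (simp add: algebra_simps)
    done
  have o: "inner_op \<mu> (S_minus \<mu> u) x = of_real x * (G1 x + of_real x * G2 x + \<mu> * G1 x) - (of_real x)^2 * G x"
    by (rule L_inner[OF _ dG dG1 x]) (simp add: g)
  have u0: "u x = nderiv 0 u x" by (simp add: nderiv.simps(1))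
  have xn: "complex_of_real x \<noteq> 0" using x by simp
  show ?thesis unfolding S_minus_def[of _ "S_minus \<mu> u"] o u0 unfolding DF_def G_def G1_def G2_def
    using xn by (simp add: field_simps power2_eq_square power3_eq_cube)
qed

lemma Splus_sq:
  assumes u: "smooth_pos u" and x: "x > 0"
  shows "S_plus \<mu> (S_plus \<mu> u) x = DF \<mu> 1 (of_real x) (\<lambda>k. nderiv k u x) + ((\<mu> + 1)^2 / 2 + 2) * u x"
proof -
  let ?U = "\<lambda>k. nderiv k u"
  have d: "\<And>k y. y > 0 \<Longrightarrow> (?U k has_vector_derivative ?U (Suc k) y) (at y)"
    using hvdU[OF u] by blast
  have d0: "\<And>y. y > 0 \<Longrightarrow> (?U 0 has_vector_derivative ?U 1 y) (at y)"
   and d1: "\<And>y. y > 0 \<Longrightarrow> (?U 1 has_vector_derivative ?U 2 y) (at y)"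
   and d2: "\<And>y. y > 0 \<Longrightarrow> (?U 2 has_vector_derivative ?U 3 y) (at y)"
   and d3: "\<And>y. y > 0 \<Longrightarrow> (?U 3 has_vector_derivative ?U 4 y) (at y)"
    using d[of _ 0] d[of _ 1] d[of _ 2] d[of _ 3] by (simp_all only: nderiv_num)
  define G where "G = (\<lambda>y. ?U 1 y + of_real y * ?U 2 y + (\<mu>+2) * ?U 1 y + (\<mu>+1) * (?U 0 y / of_real y) - of_real y * ?U 0 y)"
  define G1 where "G1 = (\<lambda>y. ?U 2 y + ?U 2 y + of_real y * ?U 3 y + (\<mu>+2) * ?U 2 y
      + (\<mu>+1) * (?U 1 y / of_real y - (?U 0 y / of_real y) / of_real y) - ?U 0 y - of_real y * ?U 1 y)"
  define G2 where "G2 = (\<lambda>y. 3 * ?U 3 y + of_real y * ?U 4 y + (\<mu>+2) * ?U 3 y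
      + (\<mu>+1) * (?U 2 y / of_real y - 2 * (?U 1 y / of_real y) / of_real y + 2 * ((?U 0 y / of_real y) / of_real y) / of_real y)
      - 2 * ?U 1 y - of_real y * ?U 2 y)"
  have g: "S_plus \<mu> u y = G y" if "y > 0" for y
  proof -
    have "S_plus \<mu> u y = (of_real y * (?U 1 y + of_real y * ?U 2 y + (\<mu>+2) * ?U 1 y) + (\<mu>+1) * ?U 0 y - (of_real y)^2 * ?U 0 y) / of_real y"
      by (rule L_splus[OF _ d0 d1 that]) (simp add: nderiv.simps(1))
    then show ?thesis using that unfolding G_def
      by (simp add: field_simps power2_eq_square)
  qed
  have dG: "(G has_vector_derivative G1 y) (at y)" if "y > 0" for y
  proof -
    have yn: "y \<noteq> 0" using that by simp
    show ?thesis unfolding G_def G1_def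
    apply (rule derivative_eq_intros d0[OF that] d1[OF that] d2[OF that] d3[OF that] refl hsq hdiv yn)+
    using yn apply (simp add: field_simps power2_eq_square)
    done
  qed
  have dG1: "(G1 has_vector_derivative G2 y) (at y)" if "y > 0" for y
  proof -
    have yn: "y \<noteq> 0" using that by simp
    show ?thesis unfolding G2_def G1_def
    apply (rule derivative_eq_intros d0[OF that] d1[OF that] d2[OF that] d3[OF that] refl hsq hdiv yn)+
    using yn apply (simp add: field_simps power2_eq_square)
    done
  qed
  have o: "S_plus \<mu> (S_plus \<mu> u) x = (of_real x * (G1 x + of_real x * G2 x + (\<mu>+2) * G1 x) + (\<mu>+1) * G x - (of_real x)^2 * G x) / of_real x"
    by (rule L_splus[OF _ dG dG1 x]) (simp add: g)
  have u0: "u x = nderiv 0 u x" by (simp add: nderiv.simps(1))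
  have xn: "complex_of_real x \<noteq> 0" using x by simp
  show ?thesis unfolding o u0 unfolding DF_def G_def G1_def G2_def
    using xn by (simp add: field_simps power2_eq_square power3_eq_cube)
qed


declare nderiv.simps[simp del]

definition acoef :: "complex \<Rightarrow> complex \<Rightarrow> complex \<Rightarrow> nat \<Rightarrow> real \<Rightarrow> complex" where
  "acoef \<mu> \<nu> lam k x = (let y = complex_of_real x in
     if k = 4 then y^2 else if k = 3 then (6+2*\<mu>+2*\<nu>) * y
     else if k = 2 then 7+6*\<mu>+6*\<nu>+\<mu>^2+\<nu>^2+3*\<mu>*\<nu> - 2*y^2
     else if k = 1 then (1+\<mu>)*(1+\<nu>)*(1+\<mu>+\<nu>)/y - (6+2*\<mu>+2*\<nu>)*y
     else if k = 0 then y^2 - (\<mu>+\<nu>+2)*(\<mu>+\<nu>+4)/2 - lam else 0)"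

lemma sum4: "(\<Sum>k\<le>(4::nat). f k) = f 0 + f 1 + f 2 + f 3 + (f 4 :: complex)"
  by (simp add: eval_nat_numeral atMost_Suc add_ac)

lemma part2_eq:
  assumes "smooth_pos u" "x > 0"
  shows "Dop \<mu> \<nu> u x - lam * u x = (\<Sum>k\<le>4. acoef \<mu> \<nu> lam k x * nderiv k u x)"
  unfolding sum4 Dop_DF[OF assms] using assms(2)
  by (simp add: acoef_def DF_def nderiv.simps(1) algebra_simps Let_def)

lemma poly_sums:
  "(\<lambda>j. (if j = 0 then A else if j = 2 then B else if j = 4 then C else 0) * (z::complex)^j) sums (A + B*z^2 + C*z^4)"
proof -
  have "(\<lambda>j. (if j = 0 then A else if j = 2 then B else if j = 4 then C else 0) * z^j) sums
     (\<Sum>j\<in>{0,2,4::nat}. (if j = 0 then A else if j = 2 then B else if j = 4 then C else 0) * z^j)"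
    by (rule sums_finite) auto
  then show ?thesis by (simp add: add.assoc)
qed

lemma lim_poly:
  assumes "\<And>x. x > 0 \<Longrightarrow> f x = A + B * (complex_of_real x)^2 + C * (complex_of_real x)^4"
  shows "Lim (at_right 0) f = A"
proof (rule tendsto_Lim)
  show "\<not> trivial_limit (at_right (0::real))" by simp
  have "((\<lambda>x. A + B * (complex_of_real x)^2 + C * (complex_of_real x)^4) \<longlongrightarrow>
      A + B * (complex_of_real 0)^2 + C * (complex_of_real 0)^4) (at_right 0)"
    by (intro tendsto_intros)
  then have "((\<lambda>x. A + B * (complex_of_real x)^2 + C * (complex_of_real x)^4) \<longlongrightarrow> A) (at_right 0)"
    by simp
  moreover have "eventually (\<lambda>x. A + B * (complex_of_real x)^2 + C * (complex_of_real x)^4 = f x) (at_right (0::real))"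
    using assms eventually_at_right_less by (metis (mono_tags, lifting) eventually_mono)
  ultimately show "(f \<longlongrightarrow> A) (at_right 0)"
    by (rule Lim_transform_eventually)
qed

definition Acf :: "complex \<Rightarrow> complex \<Rightarrow> complex \<Rightarrow> nat \<Rightarrow> complex" where
  "Acf \<mu> \<nu> lam k = (if k = 0 then 0 else if k = 1 then (1+\<mu>)*(1+\<nu>)*(1+\<mu>+\<nu>)
     else if k = 2 then 7+6*\<mu>+6*\<nu>+\<mu>^2+\<nu>^2+3*\<mu>*\<nu> else if k = 3 then 6+2*\<mu>+2*\<nu> else 1)"
definition Bcf :: "complex \<Rightarrow> complex \<Rightarrow> complex \<Rightarrow> nat \<Rightarrow> complex" where
  "Bcf \<mu> \<nu> lam k = (if k = 0 then - ((\<mu>+\<nu>+2)*(\<mu>+\<nu>+4)/2 + lam) else if k = 1 then - (6+2*\<mu>+2*\<nu>)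
     else if k = 2 then -2 else 0)"
definition Ccf :: "nat \<Rightarrow> complex" where
  "Ccf k = (if k = 0 then 1 else 0)"

lemma coef_poly:
  assumes k: "k \<le> 4" and x: "x > 0"
  shows "(complex_of_real x)^(4-k) * acoef \<mu> \<nu> lam k x / acoef \<mu> \<nu> lam 4 x
     = Acf \<mu> \<nu> lam k + Bcf \<mu> \<nu> lam k * (complex_of_real x)^2 + Ccf k * (complex_of_real x)^4"
proof -
  have xn: "complex_of_real x \<noteq> 0" using x by simp
  have "k = 0 \<or> k = 1 \<or> k = 2 \<or> k = 3 \<or> k = 4" using k by auto
  then show ?thesis using xn
    apply (elim disjE)
    apply (simp add: acoef_def Acf_def Bcf_def Ccf_def field_simps power2_eq_square eval_nat_numeral Let_def)
    apply (simp add: acoef_def Acf_def Bcf_def Ccf_def field_simps power2_eq_square eval_nat_numeral Let_def)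
    apply (simp add: acoef_def Acf_def Bcf_def Ccf_def field_simps power2_eq_square eval_nat_numeral Let_def)
    apply (simp add: acoef_def Acf_def Bcf_def Ccf_def field_simps power2_eq_square eval_nat_numeral Let_def)
    apply (simp add: acoef_def Acf_def Bcf_def Ccf_def field_simps power2_eq_square eval_nat_numeral Let_def)
    done
qed

lemma part2_rs: "regular_singular_at_0 (acoef \<mu> \<nu> lam) 4"
  unfolding regular_singular_at_0_def
proof (intro exI[of _ 1] conjI allI impI ballI)
  fix x assume x: "x \<in> {0<..<(1::real)}"
  then show "acoef \<mu> \<nu> lam 4 x \<noteq> 0" by (simp add: acoef_def)
next
  fix k :: nat assume k: "k \<le> 4"
  show "\<exists>g. \<forall>x\<in>{0<..<1}. (\<lambda>j. g j * complex_of_real x ^ j) sums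
                  (complex_of_real x ^ (4 - k) * acoef \<mu> \<nu> lam k x / acoef \<mu> \<nu> lam 4 x)"
  proof (rule exI[of _ "\<lambda>j. if j = 0 then Acf \<mu> \<nu> lam k else if j = 2 then Bcf \<mu> \<nu> lam k else if j = 4 then Ccf k else 0"], intro ballI)
    fix x :: real assume "x \<in> {0<..<1}" then have "x > 0" by simp
    show "(\<lambda>j. (if j = 0 then Acf \<mu> \<nu> lam k else if j = 2 then Bcf \<mu> \<nu> lam k else if j = 4 then Ccf k else 0) * complex_of_real x ^ j) sums
                  (complex_of_real x ^ (4 - k) * acoef \<mu> \<nu> lam k x / acoef \<mu> \<nu> lam 4 x)"
      unfolding coef_poly[OF k \<open>x > 0\<close>] by (rule poly_sums)
  qed
qed simp

lemma part2_ind: "indicial_poly (acoef \<mu> \<nu> lam) 4 s = s * (s + \<mu>) * (s + \<nu>) * (s + \<mu> + \<nu>)"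
proof -
  have L: "Lim (at_right 0) (\<lambda>x. (complex_of_real x)^(4-k) * acoef \<mu> \<nu> lam k x / acoef \<mu> \<nu> lam 4 x) = Acf \<mu> \<nu> lam k"
    if "k \<le> 4" for k
    by (rule lim_poly) (rule coef_poly[OF that])
  have "indicial_poly (acoef \<mu> \<nu> lam) 4 s = (\<Sum>k\<le>4. Acf \<mu> \<nu> lam k * (\<Prod>i<k. s - of_nat i))"
    unfolding indicial_poly_def by (rule sum.cong) (simp_all add: L)
  also have "\<dots> = s * (s + \<mu>) * (s + \<nu>) * (s + \<mu> + \<nu>)"
    unfolding sum4 by (simp add: Acf_def eval_nat_numeral lessThan_Suc algebra_simps)
  finally show ?thesis .
qed


declare nderiv.simps[simp del]

definition Qf :: "complex \<Rightarrow> complex \<Rightarrow> complex \<Rightarrow> (nat \<Rightarrow> complex) \<Rightarrow> (nat \<Rightarrow> complex) \<Rightarrow> complex" where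
  "Qf \<mu> \<nu> y f g = (1+\<mu>)*(1+\<nu>)*(f 1 * g 0 - f 0 * g 1) + (3+\<mu>+\<nu>) * y * (f 2 * g 0 - f 0 * g 2)
     + y^2 * (f 3 * g 0 - f 2 * g 1 + f 1 * g 2 - f 0 * g 3) - 2 * y^2 * (f 1 * g 0 - f 0 * g 1)"

definition QDf :: "complex \<Rightarrow> complex \<Rightarrow> complex \<Rightarrow> (nat \<Rightarrow> complex) \<Rightarrow> (nat \<Rightarrow> complex) \<Rightarrow> complex" where
  "QDf \<mu> \<nu> y f g = (let f0 = f 0; f1 = f 1; f2 = f 2; f3 = f 3; f4 = f 4; g0 = g 0; g1 = g 1; g2 = g 2; g3 = g 3; g4 = g 4 in
   (4)*f2*g0 + (-4)*f0*g2 + (2)*\<nu>*f2*g0 + (-2)*\<nu>*f0*g2 + (2)*\<mu>*f2*g0 + (-2)*\<mu>*f0*g2 + \<mu>*\<nu>*f2*g0 - \<mu>*\<nu>*f0*g2 + (5)*y*f3*g0 + y*f2*g1 - y*f1*g2 + (-4)*y*f1*g0 + (-5)*y*f0*g3 + (4)*y*f0*g1 + y*\<nu>*f3*g0 + y*\<nu>*f2*g1 - y*\<nu>*f1*g2 - y*\<nu>*f0*g3 + y*\<mu>*f3*g0 + y*\<mu>*f2*g1 - y*\<mu>*f1*g2 - y*\<mu>*f0*g3 + y^2*f4*g0 + (-2)*y^2*f2*g0 - y^2*f0*g4 + (2)*y^2*f0*g2)"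

lemma lag_alg:
  assumes "y \<noteq> 0"
  shows "(\<mu>+\<nu>+1) / y * Qf \<mu> \<nu> y f g + QDf \<mu> \<nu> y f g = DF \<mu> \<nu> y f * g 0 - f 0 * DF \<mu> \<nu> y g"
  using assms unfolding Qf_def QDf_def DF_def Let_def
  by (simp add: field_simps power2_eq_square)

lemma dQ:
  assumes p: "smooth_pos \<phi>" and q: "smooth_pos \<psi>" and y: "y > 0"
  shows "((\<lambda>x. Qf \<mu> \<nu> (of_real x) (\<lambda>k. nderiv k \<phi> x) (\<lambda>k. cnj (nderiv k \<psi> x))) has_vector_derivative
     QDf \<mu> \<nu> (of_real y) (\<lambda>k. nderiv k \<phi> y) (\<lambda>k. cnj (nderiv k \<psi> y))) (at y)"
proof -
  have d: "\<And>k. (nderiv k \<phi> has_vector_derivative nderiv (Suc k) \<phi> y) (at y)"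
    "\<And>k. (nderiv k \<psi> has_vector_derivative nderiv (Suc k) \<psi> y) (at y)"
    using hvdU[OF p y] hvdU[OF q y] by blast+
  have a0: "(nderiv 0 \<phi> has_vector_derivative nderiv 1 \<phi> y) (at y)"
   and a1: "(nderiv 1 \<phi> has_vector_derivative nderiv 2 \<phi> y) (at y)"
   and a2: "(nderiv 2 \<phi> has_vector_derivative nderiv 3 \<phi> y) (at y)"
   and a3: "(nderiv 3 \<phi> has_vector_derivative nderiv 4 \<phi> y) (at y)"
   and b0: "(nderiv 0 \<psi> has_vector_derivative nderiv 1 \<psi> y) (at y)"
   and b1: "(nderiv 1 \<psi> has_vector_derivative nderiv 2 \<psi> y) (at y)"
   and b2: "(nderiv 2 \<psi> has_vector_derivative nderiv 3 \<psi> y) (at y)"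
   and b3: "(nderiv 3 \<psi> has_vector_derivative nderiv 4 \<psi> y) (at y)"
    using d[of 0] d[of 1] d[of 2] d[of 3] by (simp_all only: nderiv_num)
  show ?thesis unfolding Qf_def QDf_def Let_def
    apply (rule derivative_eq_intros a0 a1 a2 a3 b0 b1 b2 b3 refl hsq)+
    apply (simp add: algebra_simps power2_eq_square)
    done
qed


declare nderiv.simps[simp del]

lemma hW:
  assumes "y > 0"
  shows "((\<lambda>x. complex_of_real (x powr s)) has_vector_derivative
          of_real s * of_real (y powr s) / of_real y) (at y)"
proof -
  have "((\<lambda>x. complex_of_real (x powr s)) has_vector_derivative of_real (s * y powr (s - 1))) (at y)"
    by (rule has_vector_derivative_of_real[OF has_real_derivative_powr[OF assms]])
  moreover have "y powr (s - 1) = y powr s / y" using assms by (simp add: powr_diff)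
  ultimately show ?thesis by simp
qed

lemma lag_deriv:
  assumes p: "smooth_pos \<phi>" and q: "smooth_pos \<psi>" and y: "y > 0" and hs: "complex_of_real s = \<mu> + \<nu> + 1"
  shows "((\<lambda>x. complex_of_real (x powr s) * Qf \<mu> \<nu> (of_real x) (\<lambda>k. nderiv k \<phi> x) (\<lambda>k. cnj (nderiv k \<psi> x)))
     has_vector_derivative complex_of_real (y powr s) *
       (DF \<mu> \<nu> (of_real y) (\<lambda>k. nderiv k \<phi> y) * cnj (nderiv 0 \<psi> y)
        - nderiv 0 \<phi> y * DF \<mu> \<nu> (of_real y) (\<lambda>k. cnj (nderiv k \<psi> y)))) (at y)"
proof (rule has_vector_derivative_eq_rhs[OF has_vector_derivative_mult[OF hW[OF y] dQ[OF p q y]]])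
  have yn: "complex_of_real y \<noteq> 0" using y by simp
  have e: "(\<mu>+\<nu>+1) / of_real y * Qf \<mu> \<nu> (of_real y) (\<lambda>k. nderiv k \<phi> y) (\<lambda>k. cnj (nderiv k \<psi> y))
      + QDf \<mu> \<nu> (of_real y) (\<lambda>k. nderiv k \<phi> y) (\<lambda>k. cnj (nderiv k \<psi> y))
      = DF \<mu> \<nu> (of_real y) (\<lambda>k. nderiv k \<phi> y) * cnj (nderiv 0 \<psi> y)
        - nderiv 0 \<phi> y * DF \<mu> \<nu> (of_real y) (\<lambda>k. cnj (nderiv k \<psi> y))"
    using lag_alg[OF yn, of \<mu> \<nu> "\<lambda>k. nderiv k \<phi> y" "\<lambda>k. cnj (nderiv k \<psi> y)"] by simp
  show "complex_of_real (y powr s) * QDf \<mu> \<nu> (of_real y) (\<lambda>k. nderiv k \<phi> y) (\<lambda>k. cnj (nderiv k \<psi> y)) +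
      of_real s * complex_of_real (y powr s) / of_real y * Qf \<mu> \<nu> (of_real y) (\<lambda>k. nderiv k \<phi> y) (\<lambda>k. cnj (nderiv k \<psi> y))
    = complex_of_real (y powr s) *
       (DF \<mu> \<nu> (of_real y) (\<lambda>k. nderiv k \<phi> y) * cnj (nderiv 0 \<psi> y)
        - nderiv 0 \<phi> y * DF \<mu> \<nu> (of_real y) (\<lambda>k. cnj (nderiv k \<psi> y)))"
    unfolding hs e[symmetric] by (simp add: algebra_simps)
qed

lemma vanish:
  assumes "cc_smooth_pos f"
  obtains a b where "0 < a" "a \<le> b" "\<And>x. x \<notin> {a..b} \<Longrightarrow> f x = 0"
    "\<And>k x. x > 0 \<Longrightarrow> x \<notin> {a..b} \<Longrightarrow> nderiv k f x = 0"
proof -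
  obtain a b where ab: "0 < a" "a \<le> b" "\<And>x. x \<notin> {a..b} \<Longrightarrow> f x = 0"
    using assms unfolding cc_smooth_pos_def by blast
  define S where "S = {0<..<a} \<union> {b<..}"
  have S: "open S" unfolding S_def by auto
  have "\<forall>x\<in>S. nderiv k f x = 0" for k
  proof (induction k)
    case 0 then show ?case using ab(3) by (auto simp: S_def nderiv.simps(1))
  next
    case (Suc k)
    show ?case
    proof
      fix x assume x: "x \<in> S"
      have "vector_derivative (nderiv k f) (at x) = 0"
        by (rule vd_eq[OF S x, of _ "\<lambda>_. 0"]) (use Suc in auto)
      then show "nderiv (Suc k) f x = 0" by (simp add: nderiv.simps(2))
    qed
  qed
  then have "\<And>k x. x > 0 \<Longrightarrow> x \<notin> {a..b} \<Longrightarrow> nderiv k f x = 0"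
    by (auto simp: S_def not_le)
  with ab that show ?thesis by blast
qed

lemma cont_nd:
  assumes "smooth_pos f" "0 < c"
  shows "continuous_on {c..d} (nderiv k f)"
  by (rule continuous_on_vector_derivative[of _ _ "\<lambda>x. nderiv (Suc k) f x"])
     (use assms in \<open>auto intro!: hvdU\<close>)

lemma cnj_DF: "cnj (DF \<mu> \<nu> y f) = DF (cnj \<mu>) (cnj \<nu>) (cnj y) (\<lambda>k. cnj (f k))"
  by (simp add: DF_def)

lemma cont_DF:
  assumes "0 < c" "\<And>k. continuous_on {c..d} (\<lambda>x. f k x)"
  shows "continuous_on {c..d} (\<lambda>x. DF \<mu> \<nu> (of_real x) (\<lambda>k. f k x))"
  unfolding DF_def using assms by (auto intro!: continuous_intros)


lemma part3:
  assumes mr: "\<mu> \<in> \<real>" and nr: "\<nu> \<in> \<real>"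
    and p: "cc_smooth_pos \<phi>" and q: "cc_smooth_pos \<psi>"
  shows "(\<lambda>x. Dop \<mu> \<nu> \<phi> x * cnj (\<psi> x) * complex_of_real (x powr (Re \<mu> + Re \<nu> + 1)))
              integrable_on {0<..}
         \<and> (\<lambda>x. \<phi> x * cnj (Dop \<mu> \<nu> \<psi> x) * complex_of_real (x powr (Re \<mu> + Re \<nu> + 1)))
              integrable_on {0<..}
         \<and> integral {0<..} (\<lambda>x. Dop \<mu> \<nu> \<phi> x * cnj (\<psi> x) * complex_of_real (x powr (Re \<mu> + Re \<nu> + 1)))
           = integral {0<..} (\<lambda>x. \<phi> x * cnj (Dop \<mu> \<nu> \<psi> x) * complex_of_real (x powr (Re \<mu> + Re \<nu> + 1)))"
proof -
  define s where "s = Re \<mu> + Re \<nu> + 1"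
  have hs: "complex_of_real s = \<mu> + \<nu> + 1"
    using mr nr unfolding s_def by (simp add: complex_eq_iff complex_is_Real_iff)
  have cm: "cnj \<mu> = \<mu>" "cnj \<nu> = \<nu>" using mr nr by (simp_all add: Reals_cnj_iff)
  have ps: "smooth_pos \<phi>" "smooth_pos \<psi>" using p q by (simp_all add: cc_smooth_pos_def)
  obtain a1 b1 where ab1: "0 < a1" "a1 \<le> b1" "\<And>x. x \<notin> {a1..b1} \<Longrightarrow> \<phi> x = 0"
    "\<And>k x. x > 0 \<Longrightarrow> x \<notin> {a1..b1} \<Longrightarrow> nderiv k \<phi> x = 0" using vanish[OF p] by blast
  obtain a2 b2 where ab2: "0 < a2" "a2 \<le> b2" "\<And>x. x \<notin> {a2..b2} \<Longrightarrow> \<psi> x = 0"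
    "\<And>k x. x > 0 \<Longrightarrow> x \<notin> {a2..b2} \<Longrightarrow> nderiv k \<psi> x = 0" using vanish[OF q] by blast
  define c where "c = min a1 a2 / 2"
  define d where "d = max b1 b2 + 1"
  have c0: "0 < c" "c < a1" "c < a2" using ab1 ab2 by (auto simp: c_def)
  have d0: "b1 < d" "b2 < d" "c \<le> d" using ab1 ab2 c0 by (auto simp: d_def)
  define F1 where "F1 = (\<lambda>x. Dop \<mu> \<nu> \<phi> x * cnj (\<psi> x) * complex_of_real (x powr s))"
  define F2 where "F2 = (\<lambda>x. \<phi> x * cnj (Dop \<mu> \<nu> \<psi> x) * complex_of_real (x powr s))"
  define E1 where "E1 = (\<lambda>x. DF \<mu> \<nu> (of_real x) (\<lambda>k. nderiv k \<phi> x) * cnj (nderiv 0 \<psi> x) * complex_of_real (x powr s))"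
  define E2 where "E2 = (\<lambda>x. nderiv 0 \<phi> x * DF \<mu> \<nu> (of_real x) (\<lambda>k. cnj (nderiv k \<psi> x)) * complex_of_real (x powr s))"
  define B where "B = (\<lambda>x. complex_of_real (x powr s) * Qf \<mu> \<nu> (of_real x) (\<lambda>k. nderiv k \<phi> x) (\<lambda>k. cnj (nderiv k \<psi> x)))"
  have F1E: "F1 x = E1 x" if "x \<in> {c..d}" for x
  proof -
    have "x > 0" using that c0 by auto
    then show ?thesis unfolding F1_def E1_def by (simp add: Dop_DF[OF ps(1)] nderiv.simps(1))
  qed
  have F2E: "F2 x = E2 x" if "x \<in> {c..d}" for x
  proof -
    have "x > 0" using that c0 by auto
    then show ?thesis unfolding F2_def E2_def by (simp add: Dop_DF[OF ps(2)] nderiv.simps(1) cnj_DF cm)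
  qed
  have cont1: "continuous_on {c..d} E1" unfolding E1_def
    by (intro continuous_intros cont_DF cont_nd ps c0(1)) (use c0 in auto)
  have cont2: "continuous_on {c..d} E2" unfolding E2_def
    by (intro continuous_intros cont_DF cont_nd ps c0(1)) (use c0 in auto)
  have i1: "(F1 has_integral integral {c..d} E1) {c..d}"
    using integrable_continuous_interval[OF cont1] has_integral_cong[of "{c..d}" F1 E1] F1E
    by (simp add: integrable_integral)
  have i2: "(F2 has_integral integral {c..d} E2) {c..d}"
    using integrable_continuous_interval[OF cont2] has_integral_cong[of "{c..d}" F2 E2] F2E
    by (simp add: integrable_integral)
  have z1: "F1 x = 0" if "x \<notin> {c..d}" for x
    using that ab2(3)[of x] c0 d0 unfolding F1_def by auto
  have z2: "F2 x = 0" if "x \<notin> {c..d}" for x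
    using that ab1(3)[of x] c0 d0 unfolding F2_def by auto
  have sub: "{c..d} \<subseteq> {0<..}" using c0 by auto
  have I1: "(F1 has_integral integral {c..d} E1) {0<..}" by (rule has_integral_on_superset[OF i1 z1 sub])
  have I2: "(F2 has_integral integral {c..d} E2) {0<..}" by (rule has_integral_on_superset[OF i2 z2 sub])
  have ftc: "((\<lambda>x. E1 x - E2 x) has_integral (B d - B c)) {c..d}"
  proof (rule fundamental_theorem_of_calculus[OF d0(3)])
    fix x assume x: "x \<in> {c..d}"
    then have "x > 0" using c0 by auto
    show "(B has_vector_derivative E1 x - E2 x) (at x within {c..d})"
      unfolding B_def E1_def E2_def
      by (rule has_vector_derivative_at_within, rule has_vector_derivative_eq_rhs[OF lag_deriv[OF ps \<open>x > 0\<close> hs]])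
         (simp add: algebra_simps)
  qed
  have "B c = 0" using ab1(4)[of c] c0 unfolding B_def Qf_def by simp
  moreover have "B d = 0" using ab1(4)[of d] c0 d0 unfolding B_def Qf_def by simp
  ultimately have ftc0: "((\<lambda>x. E1 x - E2 x) has_integral 0) {c..d}" using ftc by simp
  have "((\<lambda>x. E1 x - E2 x) has_integral (integral {c..d} E1 - integral {c..d} E2)) {c..d}"
    by (rule has_integral_diff) (use integrable_continuous_interval[OF cont1] integrable_continuous_interval[OF cont2] in \<open>simp_all add: integrable_integral\<close>)
  then have eq: "integral {c..d} E1 = integral {c..d} E2"
    using has_integral_unique[OF ftc0] by (metis eq_iff_diff_eq_0)
  show ?thesis using I1 I2 eq unfolding F1_def F2_def s_def
    by (auto simp: integral_unique has_integral_integrable)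
qed


lemma DF_sym: "DF \<mu> \<nu> y f = DF \<nu> \<mu> y f"
  by (simp add: DF_def algebra_simps)

theorem proposition2p1:
  fixes \<mu> \<nu> :: complex
  shows
  \<comment> \<open>(1) symmetry in mu, nu\<close>
  "(\<forall>u. smooth_pos u \<longrightarrow> (\<forall>x>0. Dop \<mu> \<nu> u x = Dop \<nu> \<mu> u x))
   \<comment> \<open>(2) regular singularity at 0 with exponents 0, -mu, -nu, -mu-nu\<close>
   \<and> (\<forall>lam::complex. \<exists>a::nat \<Rightarrow> cfun.
        (\<forall>u. smooth_pos u \<longrightarrow>
           (\<forall>x>0. Dop \<mu> \<nu> u x - lam * u x = (\<Sum>k\<le>4. a k x * nderiv k u x)))
        \<and> regular_singular_at_0 a 4
        \<and> (\<forall>s. indicial_poly a 4 s = s * (s + \<mu>) * (s + \<nu>) * (s + \<mu> + \<nu>)))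
   \<comment> \<open>(3) symmetry on C_c^infinity in L^2(R_+, x^(mu+nu+1) dx)\<close>
   \<and> ((\<mu> \<in> \<real> \<and> \<nu> \<in> \<real> \<and> Re \<mu> \<ge> -1 \<and> Re \<nu> \<ge> -1) \<longrightarrow>
        (\<forall>\<phi> \<psi>. cc_smooth_pos \<phi> \<and> cc_smooth_pos \<psi> \<longrightarrow>
           (\<lambda>x. Dop \<mu> \<nu> \<phi> x * cnj (\<psi> x) * complex_of_real (x powr (Re \<mu> + Re \<nu> + 1)))
              integrable_on {0<..}
         \<and> (\<lambda>x. \<phi> x * cnj (Dop \<mu> \<nu> \<psi> x) * complex_of_real (x powr (Re \<mu> + Re \<nu> + 1)))
              integrable_on {0<..}
         \<and> integral {0<..} (\<lambda>x. Dop \<mu> \<nu> \<phi> x * cnj (\<psi> x) * complex_of_real (x powr (Re \<mu> + Re \<nu> + 1)))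
           = integral {0<..} (\<lambda>x. \<phi> x * cnj (Dop \<mu> \<nu> \<psi> x) * complex_of_real (x powr (Re \<mu> + Re \<nu> + 1)))))
   \<comment> \<open>(5) factorisations for nu = -1 and nu = +1\<close>
   \<and> (\<forall>u. smooth_pos u \<longrightarrow> (\<forall>x>0.
        Dop \<mu> (-1) u x = S_minus \<mu> (S_minus \<mu> u) x - (\<mu> + 1)^2 / 2 * u x))
   \<and> (\<forall>u. smooth_pos u \<longrightarrow> (\<forall>x>0.
        Dop \<mu> 1 u x = S_plus \<mu> (S_plus \<mu> u) x - ((\<mu> + 1)^2 / 2 + 2) * u x))"
    apply (intro conjI allI impI)
  subgoal by (simp add: Dop_DF DF_sym)
  subgoal for lam by (rule exI[of _ "acoef \<mu> \<nu> lam"]) (simp add: part2_eq part2_rs part2_ind)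
  subgoal using part3 by blast
  subgoal using part3 by blast
  subgoal using part3 by blast
  subgoal by (simp add: Dop_DF Sminus_sq)
  subgoal by (simp add: Dop_DF Splus_sq)
  done

end
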